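(* Let $k\ge 1$, let $0<\alpha\le 1$, and let $G=(\mathcal{X},\mathcal{A},\mu,V)$ be a $k$-player game. Let $G_{\perp}$ be the $k$-player game with question sets $\mathcal{X}^t\cup\{\perp\}$ ($t\in[k]$, where $\perp$ is a new symbol) and the same answer sets, in which the referee samples $(x^1,\dots,x^k)\sim\mu$, independently for each $t\in[k]$ replaces $x^t$ by $\perp$ with probability $\alpha$, sends the resulting questions to the players, and accepts if at least one question equals $\perp$, and otherwise accepts iff $V((x^1,\dots,x^k),(a^1,\dots,a^k))=1$. Then $G_\perp$ is an $\alpha$-anchored game, and $$\mathrm{val}(G_\perp)=1-(1-\alpha)^k\,(1-\mathrm{val}(G)),\qquad \mathrm{val}^*(G_\perp)=1-(1-\alpha)^k\,(1-\mathrm{val}^*(G)).$$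
   Context: A $k$-player game $G=(\mathcal{X},\mathcal{A},\mu,V)$ consists of finite question sets with $\mathcal{X}=\mathcal{X}^1\times\cdots\times\mathcal{X}^k$, finite answer sets with $\mathcal{A}=\mathcal{A}^1\times\cdots\times\mathcal{A}^k$, a probability measure $\mu$ on $\mathcal{X}$, and a predicate $V:\mathcal{X}\times\mathcal{A}\to\{0,1\}$. The referee samples $x=(x^1,\dots,x^k)\sim\mu$, sends $x^t$ to player $t$, receives $a^t\in\mathcal{A}^t$, and the players win iff $V(x,a)=1$. The classical value is $\mathrm{val}(G)=\sup_{f^1,\dots,f^k}\mathbb{E}_{x\sim\mu}V(x,(f^1(x^1),\dots,f^k(x^k)))$ over functions $f^t:\mathcal{X}^t\to\mathcal{A}^t$. The entangled value is $\mathrm{val}^*(G)=\sup \mathbb{E}_{x\sim\mu}\sum_{a:V(x,a)=1}\langle\psi|M^1(x^1,a^1)\otimes\cdots\otimes M^k(x^k,a^k)|\psi\rangle$, the supremum over all integers $d\ge2$, unit vectors $|\psi\rangle\in(\mathbb{C}^d)^{\otimes k}$, and for each player $t$ and question $x^t$ a POVM $\{M^t(x^t,a^t)\}_{a^t\in\mathcal{A}^t}$ on $\mathbb{C}^d$. A $k$-player game is $\alpha$-anchored if there exist subsets $\mathcal{X}^t_\perp\subseteq\mathcal{X}^t$ ($t\in[k]$) such that (1) for each $t$ the marginal probability under $\mu$ that $x^t\in\mathcal{X}^t_\perp$ is at least $\alpha$, and (2) for all $x\in\mathcal{X}$, $\mu(x)=\mu(x|_{\overline{F}_x})\prod_{t\in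 F_x}\mu(x^t)$, where $F_x=\{t\in[k]:x^t\in\mathcal{X}^t_\perp\}$, $\overline{F}_x=[k]\setminus F_x$, $\mu(x|_S)=\sum_{x':x'|_S=x|_S}\mu(x')$ is the marginal probability of the restriction of $x$ to the coordinates in $S$ (equal to $1$ for $S=\emptyset$), and $\mu(x^t)$ is the marginal probability of the $t$-th coordinate. *)

theory Defs
  imports Complex_Main "HOL-Library.FuncSet"
begin

text \<open>Players are indexed by 0..k-1. Question tuples and answer
tuples are extensional functions nat => _ (elements of PiE {..<k} _).
The distribution mu is given by its probability mass function on question tuples.\<close>

record ('q, 'a) game =
  qs   :: "nat \<Rightarrow> 'q set"
  ans  :: "nat \<Rightarrow> 'a set"
  dist :: "(nat \<Rightarrow> 'q) \<Rightarrow> real"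
  pred :: "(nat \<Rightarrow> 'q) \<Rightarrow> (nat \<Rightarrow> 'a) \<Rightarrow> bool"

abbreviation questions :: "nat \<Rightarrow> ('q, 'a) game \<Rightarrow> (nat \<Rightarrow> 'q) set" where
  "questions k G \<equiv> PiE {..<k} (qs G)"

abbreviation answers :: "nat \<Rightarrow> ('q, 'a) game \<Rightarrow> (nat \<Rightarrow> 'a) set" where
  "answers k G \<equiv> PiE {..<k} (ans G)"

definition is_game :: "nat \<Rightarrow> ('q, 'a) game \<Rightarrow> bool" where
  "is_game k G \<longleftrightarrow>
     (\<forall>t<k. finite (qs G t) \<and> finite (ans G t) \<and> ans G t \<noteq> {}) \<and>
     (\<forall>x. 0 \<le> dist G x) \<and>
     (\<forall>x. x \<notin> questions k G \<longrightarrow> dist G x = 0) \<and>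
     (\<Sum>x\<in>questions k G. dist G x) = 1"

definition val :: "nat \<Rightarrow> ('q, 'a) game \<Rightarrow> real" where
  "val k G = Sup {(\<Sum>x\<in>questions k G. dist G x *
        (if pred G x (\<lambda>t\<in>{..<k}. f t (x t)) then 1 else 0)) | f.
        \<forall>t<k. \<forall>q\<in>qs G t. f t q \<in> ans G t}"

definition psd :: "nat \<Rightarrow> (nat \<Rightarrow> nat \<Rightarrow> complex) \<Rightarrow> bool" where
  "psd d P \<longleftrightarrow> (\<forall>v :: nat \<Rightarrow> complex.
      Im (\<Sum>i<d. \<Sum>j<d. cnj (v i) * P i j * v j) = 0 \<and>
      0 \<le> Re (\<Sum>i<d. \<Sum>j<d. cnj (v i) * P i j * v j))"

text \<open>M t q a is the POVM element of player t for question q and answer a.\<close>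
definition povm_strategy :: "nat \<Rightarrow> ('q, 'a) game \<Rightarrow> nat \<Rightarrow>
    (nat \<Rightarrow> 'q \<Rightarrow> 'a \<Rightarrow> nat \<Rightarrow> nat \<Rightarrow> complex) \<Rightarrow> bool" where
  "povm_strategy k G d M \<longleftrightarrow>
     (\<forall>t<k. \<forall>q\<in>qs G t.
        (\<forall>a\<in>ans G t. psd d (M t q a)) \<and>
        (\<forall>i<d. \<forall>j<d. (\<Sum>a\<in>ans G t. M t q a i j) = (if i = j then 1 else 0)))"

text \<open>Vectors in (C^d)^{\<otimes>k} are functions on basis index tuples in PiE {..<k} (\<lambda>_. {..<d}).\<close>
abbreviation basis_idx :: "nat \<Rightarrow> nat \<Rightarrow> (nat \<Rightarrow> nat) set" where
  "basis_idx k d \<equiv> PiE {..<k} (\<lambda>_. {..<d})"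

definition unit_state :: "nat \<Rightarrow> nat \<Rightarrow> ((nat \<Rightarrow> nat) \<Rightarrow> complex) \<Rightarrow> bool" where
  "unit_state k d \<psi> \<longleftrightarrow> (\<Sum>i\<in>basis_idx k d. (cmod (\<psi> i))\<^sup>2) = 1"

text \<open>\<langle>\<psi>| M^1(x^1,a^1) \<otimes> ... \<otimes> M^k(x^k,a^k) |\<psi>\<rangle>\<close>
definition tensor_expect ::
  "nat \<Rightarrow> nat \<Rightarrow> ((nat \<Rightarrow> nat) \<Rightarrow> complex) \<Rightarrow>
   (nat \<Rightarrow> 'q \<Rightarrow> 'a \<Rightarrow> nat \<Rightarrow> nat \<Rightarrow> complex) \<Rightarrow> (nat \<Rightarrow> 'q) \<Rightarrow> (nat \<Rightarrow> 'a) \<Rightarrow> complex" where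
  "tensor_expect k d \<psi> M x a =
     (\<Sum>i\<in>basis_idx k d. \<Sum>j\<in>basis_idx k d.
        cnj (\<psi> i) * (\<Prod>t<k. M t (x t) (a t) (i t) (j t)) * \<psi> j)"

definition ent_strategy_value ::
  "nat \<Rightarrow> ('q, 'a) game \<Rightarrow> nat \<Rightarrow> ((nat \<Rightarrow> nat) \<Rightarrow> complex) \<Rightarrow>
   (nat \<Rightarrow> 'q \<Rightarrow> 'a \<Rightarrow> nat \<Rightarrow> nat \<Rightarrow> complex) \<Rightarrow> real" where
  "ent_strategy_value k G d \<psi> M =
     Re (\<Sum>x\<in>questions k G. complex_of_real (dist G x) *
          (\<Sum>a\<in>{a\<in>answers k G. pred G x a}. tensor_expect k d \<psi> M x a))"

definition val_ent :: "nat \<Rightarrow> ('q, 'a) game \<Rightarrow> real" where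
  "val_ent k G = Sup {ent_strategy_value k G d \<psi> M | d \<psi> M.
       2 \<le> d \<and> unit_state k d \<psi> \<and> povm_strategy k G d M}"

definition marg :: "nat \<Rightarrow> ('q, 'a) game \<Rightarrow> nat set \<Rightarrow> (nat \<Rightarrow> 'q) \<Rightarrow> real" where
  "marg k G S x = (\<Sum>x'\<in>{x'\<in>questions k G. \<forall>t\<in>S. x' t = x t}. dist G x')"

definition anchored :: "nat \<Rightarrow> real \<Rightarrow> ('q, 'a) game \<Rightarrow> bool" where
  "anchored k \<alpha> G \<longleftrightarrow> is_game k G \<and>
     (\<exists>Xp :: nat \<Rightarrow> 'q set.
        (\<forall>t<k. Xp t \<subseteq> qs G t) \<and>
        (\<forall>t<k. \<alpha> \<le> (\<Sum>x\<in>{x\<in>questions k G. x t \<in> Xp t}. dist G x)) \<and>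
        (\<forall>x\<in>questions k G.
           let F = {t\<in>{..<k}. x t \<in> Xp t} in
           dist G x = marg k G ({..<k} - F) x * (\<Prod>t\<in>F. marg k G {t} x)))"

text \<open>The game G_\<perp>; the new symbol \<perp> is None, an original question q is Some q.\<close>
definition perp_game :: "nat \<Rightarrow> real \<Rightarrow> ('q, 'a) game \<Rightarrow> ('q option, 'a) game" where
  "perp_game k \<alpha> G =
     \<lparr> qs = (\<lambda>t. insert None (Some ` qs G t)),
       ans = ans G,
       dist = (\<lambda>y. if y \<in> PiE {..<k} (\<lambda>t. insert None (Some ` qs G t))
                  then (\<Sum>x\<in>questions k G. dist G x *
                          (\<Prod>t<k. if y t = None then \<alpha>
                                   else if y t = Some (x t) then 1 - \<alpha> else 0))
                  else 0),
       pred = (\<lambda>y a. (\<exists>t<k. y t = None) \<or> pred G (\<lambda>t\<in>{..<k}. the (y t)) a) \<rparr>"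

end

theory Submission
  imports Defs
begin


definition qf :: "nat \<Rightarrow> (nat \<Rightarrow> nat \<Rightarrow> complex) \<Rightarrow> (nat \<Rightarrow> complex) \<Rightarrow> complex" where
  "qf d A v = (\<Sum>i<d. \<Sum>j<d. cnj (v i) * A i j * v j)"

lemma psd_qf: "psd d A \<longleftrightarrow> (\<forall>v. Im (qf d A v) = 0 \<and> 0 \<le> Re (qf d A v))"
  by (simp add: psd_def qf_def)

lemma qf_zero[simp]: "qf d A (\<lambda>_. 0) = 0" by (simp add: qf_def)

lemma sum2_delta: "m < (d::nat) \<Longrightarrow> (\<Sum>i<d. \<Sum>j<d. if i = m \<and> j = m then f i j else 0) = (f m m :: 'c::comm_monoid_add)"
proof -
  assume md: "m < d"
  have "(\<Sum>i<d. \<Sum>j<d. if i = m \<and> j = m then f i j else 0) = (\<Sum>i<d. if i = m then f m m else 0)"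
  proof (intro sum.cong refl)
    fix i assume "i \<in> {..<d}"
    show "(\<Sum>j<d. if i = m \<and> j = m then f i j else 0) = (if i = m then f m m else 0)"
    proof (cases "i = m")
      case True
      have "(\<Sum>j<d. if j = m then f m j else 0) = f m m" using md by (subst sum.delta) auto
      then show ?thesis using True md by simp
    qed simp
  qed
  also have "\<dots> = f m m" using md by (simp add: sum.delta)
  finally show ?thesis .
qed

lemma qf_expand:
  assumes "m < d"
  shows "qf d A (\<lambda>i. v i + (if i = m then t else 0)) =
    qf d A v + cnj t * (\<Sum>b<d. A m b * v b) + t * (\<Sum>a<d. cnj (v a) * A a m) + cnj t * t * A m m"
proof -
  have "qf d A (\<lambda>i. v i + (if i = m then t else 0)) =
     (\<Sum>i<d. \<Sum>j<d. cnj (v i) * A i j * v j + (if j = m then cnj (v i) * A i j * t else 0)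
        + (if i = m then cnj t * A i j * v j else 0) + (if i = m \<and> j = m then cnj t * A i j * t else 0))"
    unfolding qf_def by (intro sum.cong refl) (auto simp: algebra_simps)
  also have "\<dots> = qf d A v + cnj t * (\<Sum>b<d. A m b * v b) + t * (\<Sum>a<d. cnj (v a) * A a m) + cnj t * t * A m m"
    using assms
    apply (simp only: sum.distrib)
    apply (simp add: qf_def sum_distrib_left mult.assoc mult.left_commute)
    apply (subst sum.swap)
    apply (simp add: sum_distrib_left mult.assoc mult.left_commute sum2_delta)
    apply (simp add: algebra_simps)
    done
  finally show ?thesis .
qed

lemma qf_unit:
  assumes "m < d" shows "qf d A (\<lambda>i. if i = m then t else 0) = cnj t * t * A m m"
  using qf_expand[OF assms, of A "\<lambda>_. 0" t] by simp

lemma psd_diag: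
  assumes "psd d A" "m < d" shows "Im (A m m) = 0 \<and> 0 \<le> Re (A m m)"
  using assms qf_unit[OF assms(2), of A 1] unfolding psd_qf by (metis mult_1 complex_cnj_one)

lemma sum_delta_r: "b < (d::nat) \<Longrightarrow> (\<Sum>c<d. f c * (if c = b then 1 else 0)) = (f b :: 'a::comm_ring_1)"
proof -
  assume "b < d"
  have "(\<Sum>c<d. f c * (if c = b then 1 else 0)) = (\<Sum>c<d. if c = b then f c else 0)"
    by (rule sum.cong) auto
  then show ?thesis using \<open>b < d\<close> by simp
qed

lemma sum_delta_l: "b < (d::nat) \<Longrightarrow> (\<Sum>c<d. cnj (if c = b then 1 else 0) * f c) = f b"
proof -
  assume "b < d"
  have "(\<Sum>c<d. cnj (if c = b then 1 else 0) * f c) = (\<Sum>c<d. if c = b then f c else 0)"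
    by (rule sum.cong) auto
  then show ?thesis using \<open>b < d\<close> by simp
qed

lemma qf_two:
  assumes "m < d" "b < d" "b \<noteq> m"
  shows "qf d A (\<lambda>i. (if i = b then 1 else 0) + (if i = m then t else 0)) =
         A b b + cnj t * A m b + t * A b m + cnj t * t * A m m"
proof -
  have "qf d A (\<lambda>i. (if i = b then 1 else 0) + (if i = m then t else 0)) =
     qf d A (\<lambda>i. if i = b then 1 else 0) + cnj t * (\<Sum>c<d. A m c * (if c = b then 1 else 0)) + t * (\<Sum>c<d. cnj (if c = b then 1 else 0) * A c m) + cnj t * t * A m m"
    by (rule qf_expand[OF assms(1)])
  also have "\<dots> = A b b + cnj t * A m b + t * A b m + cnj t * t * A m m"
    using assms qf_unit[OF assms(2), of A 1] by (simp only: sum_delta_r sum_delta_l) simp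
  finally show ?thesis .
qed

lemma psd_herm:
  assumes "psd d A" "a < d" "b < d" shows "A a b = cnj (A b a)"
proof (cases "a = b")
  case True
  then show ?thesis using psd_diag[OF assms(1,2)] by (simp add: complex_eq_iff)
next
  case False
  have da: "Im (A a a) = 0" and db: "Im (A b b) = 0"
    using psd_diag[OF assms(1,2)] psd_diag[OF assms(1,3)] by auto
  have 1: "Im (qf d A (\<lambda>i. (if i = a then 1 else 0) + (if i = b then 1 else 0))) = 0"
    using assms(1) unfolding psd_qf by blast
  have 2: "Im (qf d A (\<lambda>i. (if i = a then 1 else 0) + (if i = b then \<i> else 0))) = 0"
    using assms(1) unfolding psd_qf by blast
  from 1 have "Im (A b a) + Im (A a b) = 0"
    using qf_two[OF assms(3,2), of A 1] False da db by simp
  moreover from 2 have "Re (A a b) - Re (A b a) = 0"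
    using qf_two[OF assms(3,2), of A \<i>] False da db by simp
  ultimately show ?thesis by (simp add: complex_eq_iff)
qed

lemma psd_zero_row:
  assumes "psd d A" "m < d" "A m m = 0" "b < d" shows "A m b = 0"
proof (rule ccontr)
  assume nz: "A m b \<noteq> 0"
  then have bm: "b \<noteq> m" using assms by auto
  define z where "z = A m b"
  have hz: "A b m = cnj z" using psd_herm[OF assms(1,4,2)] z_def by simp
  define r where "r = (Re (A b b) + 1) / (2 * (cmod z)^2)"
  have zpos: "(cmod z)^2 > 0" using nz z_def by simp
  define t where "t = - complex_of_real r * z"
  have "0 \<le> Re (qf d A (\<lambda>i. (if i = b then 1 else 0) + (if i = m then t else 0)))"
    using assms(1) unfolding psd_qf by blast
  also have "\<dots> = Re (A b b) + Re (cnj t * z) + Re (t * cnj z)"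
    using qf_two[OF assms(2,4) bm, of A t] assms(3) hz z_def by simp
  also have "cnj t * z = - complex_of_real (r * (cmod z)^2)"
    using cmod_power2[of z] unfolding t_def by (simp add: complex_eq_iff algebra_simps power2_eq_square)
  also have "t * cnj z = - complex_of_real (r * (cmod z)^2)"
    using cmod_power2[of z] unfolding t_def by (simp add: complex_eq_iff algebra_simps power2_eq_square)
  also have "r * (cmod z)^2 = (Re (A b b) + 1) / 2" unfolding r_def using zpos by simp
  finally show False by simp
qed

lemma psd_schur:
  assumes psd: "psd d A" and md: "m < d" and pr: "A m m = complex_of_real pr" "pr > 0"
  shows "psd d (\<lambda>a b. A a b - A a m * A m b / A m m)"
  unfolding psd_qf
proof
  fix v
  define p where "p = A m m"
  define s where "s = (\<Sum>b<d. A m b * v b)"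
  define t where "t = - s / p"
  have cs: "(\<Sum>a<d. cnj (v a) * A a m) = cnj s"
    unfolding s_def by (auto intro!: sum.cong simp: psd_herm[OF psd _ md] mult.commute)
  have cp: "cnj p = p" using pr p_def by simp
  have p0: "p \<noteq> 0" using pr p_def by simp
  have "qf d (\<lambda>a b. A a b - A a m * A m b / A m m) v =
        qf d A v - (\<Sum>a<d. \<Sum>b<d. cnj (v a) * A a m * (A m b * v b) / p)"
    unfolding qf_def p_def by (simp add: sum_subtractf algebra_simps)
  also have "(\<Sum>a<d. \<Sum>b<d. cnj (v a) * A a m * (A m b * v b) / p) = (\<Sum>a<d. cnj (v a) * A a m) * s / p"
    unfolding s_def by (simp add: sum_distrib_left sum_distrib_right sum_divide_distrib) (rule sum.swap)
  also have "\<dots> = cnj s * s / p" using cs by simp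
  also have "qf d A v - cnj s * s / p = qf d A (\<lambda>i. v i + (if i = m then t else 0))"
    unfolding qf_expand[OF md] cs s_def[symmetric] p_def[symmetric] t_def using cp p0
    by (simp add: field_simps)
  finally have eq: "qf d (\<lambda>a b. A a b - A a m * A m b / A m m) v = qf d A (\<lambda>i. v i + (if i = m then t else 0))" .
  show "Im (qf d (\<lambda>a b. A a b - A a m * A m b / A m m) v) = 0 \<and>
        0 \<le> Re (qf d (\<lambda>a b. A a b - A a m * A m b / A m m) v)"
    unfolding eq using psd unfolding psd_qf by blast
qed

lemma psd_decomp_aux:
  "n \<le> d \<Longrightarrow> psd d A \<Longrightarrow> (\<forall>a<d. \<forall>b<d. (a < d - n \<or> b < d - n) \<longrightarrow> A a b = 0) \<Longrightarrow>
   \<exists>w. \<forall>a<d. \<forall>b<d. A a b = (\<Sum>l\<in>{d-n..<d}. cnj (w l a) * w l b)"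
proof (induction n arbitrary: A)
  case 0
  then show ?case by auto
next
  case (Suc n)
  define m where "m = d - Suc n"
  have md: "m < d" and m1: "d - n = Suc m" using Suc.prems(1) m_def by auto
  have split: "{m..<d} = insert m {Suc m..<d}" using md by auto
  have zA: "\<And>a b. a < d \<Longrightarrow> b < d \<Longrightarrow> a < m \<or> b < m \<Longrightarrow> A a b = 0"
    using Suc.prems(3) m_def by auto
  define pr where "pr = Re (A m m)"
  have pr: "A m m = complex_of_real pr" "pr \<ge> 0"
    using psd_diag[OF Suc.prems(2) md] unfolding pr_def by (auto simp: complex_eq_iff)
  show ?case
  proof (cases "pr = 0")
    case True
    have row: "A m b = 0" if "b < d" for b using psd_zero_row[OF Suc.prems(2) md _ that] pr True by simp
    have col: "A a m = 0" if "a < d" for a using row[OF that] psd_herm[OF Suc.prems(2) that md] by simp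
    have zc: "\<forall>a<d. \<forall>b<d. (a < d - n \<or> b < d - n) \<longrightarrow> A a b = 0"
      using zA row col m1 by (metis less_antisym)
    have "\<exists>w. \<forall>a<d. \<forall>b<d. A a b = (\<Sum>l\<in>{d-n..<d}. cnj (w l a) * w l b)"
      by (rule Suc.IH) (use Suc.prems zc in auto)
    then obtain w where w: "\<forall>a<d. \<forall>b<d. A a b = (\<Sum>l\<in>{d-n..<d}. cnj (w l a) * w l b)"
      by blast
    define w' where "w' = w(m := (\<lambda>_. 0))"
    have "\<forall>a<d. \<forall>b<d. A a b = (\<Sum>l\<in>{d - Suc n..<d}. cnj (w' l a) * w' l b)"
      unfolding m_def[symmetric] split using w m1 by (auto simp: w'_def intro!: sum.cong)
    then show ?thesis by blast
  next
    case False
    then have prp: "pr > 0" using pr by simp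
    define A' where "A' = (\<lambda>a b. A a b - A a m * A m b / A m m)"
    have psd': "psd d A'" unfolding A'_def by (rule psd_schur[OF Suc.prems(2) md pr(1) prp])
    have zc: "\<forall>a<d. \<forall>b<d. (a < d - n \<or> b < d - n) \<longrightarrow> A' a b = 0"
    proof (intro allI impI)
      fix a b assume ab: "a < d" "b < d" "a < d - n \<or> b < d - n"
      then consider "a < m" | "b < m" | "a = m" | "b = m" using m1 by linarith
      then show "A' a b = 0"
      proof cases
        case 1 then show ?thesis using zA ab md unfolding A'_def by simp
      next
        case 2 then show ?thesis using zA ab md unfolding A'_def by simp
      next
        case 3 then show ?thesis using pr prp unfolding A'_def by simp
      next
        case 4 then show ?thesis using pr prp unfolding A'_def by simp
      qed
    qed
    have "\<exists>w. \<forall>a<d. \<forall>b<d. A' a b = (\<Sum>l\<in>{d-n..<d}. cnj (w l a) * w l b)"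
      by (rule Suc.IH) (use Suc.prems zc psd' in auto)
    then obtain w where w: "\<forall>a<d. \<forall>b<d. A' a b = (\<Sum>l\<in>{d-n..<d}. cnj (w l a) * w l b)"
      by blast
    define w' where "w' = w(m := (\<lambda>b. A m b / complex_of_real (sqrt pr)))"
    have "A a b = (\<Sum>l\<in>{d - Suc n..<d}. cnj (w' l a) * w' l b)" if ab: "a < d" "b < d" for a b
    proof -
      have "(\<Sum>l\<in>{d - Suc n..<d}. cnj (w' l a) * w' l b) =
            cnj (A m a) * A m b / complex_of_real pr + (\<Sum>l\<in>{Suc m..<d}. cnj (w l a) * w l b)"
        unfolding m_def[symmetric] split using prp
        by (simp add: w'_def sum.cong[OF refl, of _ "\<lambda>l. cnj (w' l a) * w' l b"] field_simps
             flip: of_real_mult)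
      also have "cnj (A m a) = A a m" using psd_herm[OF Suc.prems(2) ab(1) md] by simp
      also have "(\<Sum>l\<in>{Suc m..<d}. cnj (w l a) * w l b) = A' a b" using w ab m1 by simp
      finally show ?thesis unfolding A'_def using pr by simp
    qed
    then show ?thesis by blast
  qed
qed

lemma psd_decomp:
  assumes "psd d A" shows "\<exists>w. \<forall>a<d. \<forall>b<d. A a b = (\<Sum>l<d. cnj (w l a) * w l b)"
  using psd_decomp_aux[of d d A] assms by (simp add: atLeast0LessThan)

lemma sum_PiE_Suc:
  assumes "finite (B k)"
  shows "(\<Sum>g\<in>PiE {..<Suc k} B. F g) = (\<Sum>g\<in>PiE {..<k} B. \<Sum>y\<in>B k. F (g(k := y)))"
proof -
  have "(\<Sum>g\<in>PiE (insert k {..<k}) B. F g) = (\<Sum>(y,g)\<in>B k \<times> PiE {..<k} B. F (g(k := y)))"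
    by (intro sum.reindex_bij_witness[of _ "\<lambda>(y,g). g(k := y)" "\<lambda>g. (g k, g(k := undefined))"])
       (auto simp: PiE_def extensional_def)
  also have "\<dots> = (\<Sum>y\<in>B k. \<Sum>g\<in>PiE {..<k} B. F (g(k := y)))"
    by (subst sum.cartesian_product) auto
  also have "\<dots> = (\<Sum>g\<in>PiE {..<k} B. \<Sum>y\<in>B k. F (g(k := y)))"
    by (rule sum.swap)
  finally show ?thesis by (simp add: lessThan_Suc)
qed

definition TQ :: "nat \<Rightarrow> nat \<Rightarrow> (nat \<Rightarrow> nat \<Rightarrow> nat \<Rightarrow> complex) \<Rightarrow> ((nat \<Rightarrow> nat) \<Rightarrow> complex) \<Rightarrow> complex" where
  "TQ k d A \<psi> = (\<Sum>i\<in>basis_idx k d. \<Sum>j\<in>basis_idx k d. cnj (\<psi> i) * (\<Prod>t<k. A t (i t) (j t)) * \<psi> j)"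

lemma sum_swap5:
  "(\<Sum>l\<in>L. \<Sum>g\<in>G. \<Sum>h\<in>H. \<Sum>a\<in>A. \<Sum>b\<in>B. f l g h a b) =
   (\<Sum>g\<in>G. \<Sum>h\<in>H. \<Sum>a\<in>A. \<Sum>b\<in>B. \<Sum>l\<in>L. (f l g h a b :: 'c::comm_monoid_add))"
  apply (rule trans[OF sum.swap])
  apply (rule sum.cong[OF refl])
  apply (rule trans[OF sum.swap])
  apply (rule sum.cong[OF refl])
  apply (rule trans[OF sum.swap])
  apply (rule sum.cong[OF refl])
  apply (rule sum.swap)
  done

lemma TQ_nonneg:
  "(\<forall>t<k. psd d (A t)) \<Longrightarrow> 0 \<le> Re (TQ k d A \<psi>)"
proof (induction k arbitrary: \<psi>)
  case 0
  then show ?case by (simp add: TQ_def)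
next
  case (Suc k)
  obtain w where w: "\<forall>a<d. \<forall>b<d. A k a b = (\<Sum>l<d. cnj (w l a) * w l b)"
    using psd_decomp Suc.prems by blast
  define P where "P = (\<lambda>g h. \<Prod>t<k. A t (g t) (h t))"
  define \<phi> where "\<phi> = (\<lambda>l g. \<Sum>a<d. w l a * \<psi> (g(k := a)))"
  let ?B = "basis_idx k d"
  have prodS: "(\<Prod>t<Suc k. A t ((g(k := a)) t) ((h(k := b)) t)) = P g h * A k a b" for g h a b
    unfolding P_def by (simp add: lessThan_Suc)
  have "TQ (Suc k) d A \<psi> = (\<Sum>g\<in>?B. \<Sum>a<d. \<Sum>h\<in>?B. \<Sum>b<d.
          cnj (\<psi> (g(k := a))) * (P g h * A k a b) * \<psi> (h(k := b)))"
    unfolding TQ_def by (simp add: sum_PiE_Suc prodS sum_distrib_left sum_distrib_right P_def)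
  also have "\<dots> = (\<Sum>g\<in>?B. \<Sum>h\<in>?B. \<Sum>a<d. \<Sum>b<d.
          cnj (\<psi> (g(k := a))) * (P g h * A k a b) * \<psi> (h(k := b)))"
    by (rule sum.cong[OF refl]) (rule sum.swap)
  also have "\<dots> = (\<Sum>g\<in>?B. \<Sum>h\<in>?B. \<Sum>a<d. \<Sum>b<d. \<Sum>l<d.
          cnj (w l a) * w l b * (cnj (\<psi> (g(k := a))) * P g h * \<psi> (h(k := b))))"
    using w by (intro sum.cong refl) (simp add: sum_distrib_left sum_distrib_right mult_ac)
  also have "\<dots> = (\<Sum>l<d. \<Sum>g\<in>?B. \<Sum>h\<in>?B. \<Sum>a<d. \<Sum>b<d.
          cnj (w l a) * w l b * (cnj (\<psi> (g(k := a))) * P g h * \<psi> (h(k := b))))"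
    by (rule sum_swap5[symmetric])
  also have "\<dots> = (\<Sum>l<d. TQ k d A (\<phi> l))"
    unfolding TQ_def \<phi>_def P_def
    by (intro sum.cong refl) (simp add: sum_distrib_left sum_distrib_right mult_ac)
  finally have "Re (TQ (Suc k) d A \<psi>) = (\<Sum>l<d. Re (TQ k d A (\<phi> l)))" by simp
  also have "\<dots> \<ge> 0" using Suc by (intro sum_nonneg) auto
  finally show ?case .
qed



lemma Sup_affine:
  fixes S :: "real set"
  assumes "S \<noteq> {}" "bdd_above S" "0 \<le> e"
  shows "Sup ((\<lambda>v. 1 - e * (1 - v)) ` S) = 1 - e * (1 - Sup S)"
proof -
  have "mono (\<lambda>v::real. 1 - e * (1 - v))"
    using assms(3) by (auto intro!: monoI mult_left_mono)
  moreover have "continuous (at_left (Sup S)) (\<lambda>v::real. 1 - e * (1 - v))"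
    by (intro continuous_intros)
  ultimately show ?thesis using continuous_at_Sup_mono assms(1,2) by metis
qed

lemma game_qs_nonempty:
  assumes "is_game k G" "t < k" shows "qs G t \<noteq> {}"
proof
  assume "qs G t = {}"
  then have "questions k G = {}" using assms(2) by (auto simp: PiE_eq_empty_iff)
  then show False using assms(1) by (simp add: is_game_def)
qed

definition wq :: "real \<Rightarrow> 'q \<Rightarrow> 'q option \<Rightarrow> real" where
  "wq \<alpha> q y = (if y = None then \<alpha> else if y = Some q then 1 - \<alpha> else 0)"

lemma perp_simps:
  "qs (perp_game k \<alpha> G) = (\<lambda>t. insert None (Some ` qs G t))"
  "ans (perp_game k \<alpha> G) = ans G"
  "pred (perp_game k \<alpha> G) = (\<lambda>y a. (\<exists>t<k. y t = None) \<or> pred G (\<lambda>t\<in>{..<k}. the (y t)) a)"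
  by (simp_all add: perp_game_def)

lemma perp_dist:
  "dist (perp_game k \<alpha> G) y = (if y \<in> PiE {..<k} (\<lambda>t. insert None (Some ` qs G t))
     then (\<Sum>x\<in>questions k G. dist G x * (\<Prod>t<k. wq \<alpha> (x t) (y t))) else 0)"
  by (simp add: perp_game_def wq_def)

lemma sum_opt:
  assumes "finite S"
  shows "(\<Sum>q\<in>insert None (Some ` S). f q) = f None + (\<Sum>s\<in>S. f (Some s))"
  using assms by (simp add: sum.reindex)

lemma sum_wq:
  assumes "finite S" "q \<in> S"
  shows "(\<Sum>y\<in>insert None (Some ` S). wq \<alpha> q y) = 1"
proof -
  have "(\<Sum>s\<in>S. wq \<alpha> q (Some s)) = (\<Sum>s\<in>S. if s = q then 1 - \<alpha> else 0)"
    by (rule sum.cong) (auto simp: wq_def)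
  moreover have "(\<Sum>y\<in>insert None (Some ` S). wq \<alpha> q y) = wq \<alpha> q None + (\<Sum>s\<in>S. wq \<alpha> q (Some s))"
    by (rule sum_opt[OF assms(1)])
  ultimately show ?thesis using assms by (simp add: wq_def)
qed

lemma sumW_restrict:
  assumes G: "is_game k G" and x: "x \<in> questions k G" and C: "C \<subseteq> {..<k}"
    and y0: "\<forall>s\<in>C. y0 s \<in> insert None (Some ` qs G s)"
  shows "(\<Sum>y\<in>{y\<in>PiE {..<k} (\<lambda>t. insert None (Some ` qs G t)). \<forall>s\<in>C. y s = y0 s}. \<Prod>t<k. wq \<alpha> (x t) (y t))
         = (\<Prod>s\<in>C. wq \<alpha> (x s) (y0 s))"
proof -
  have fin: "\<And>t. t < k \<Longrightarrow> finite (qs G t)" using G by (simp add: is_game_def)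
  have eq: "{y\<in>PiE {..<k} (\<lambda>t. insert None (Some ` qs G t)). \<forall>s\<in>C. y s = y0 s}
        = PiE {..<k} (\<lambda>t. if t \<in> C then {y0 t} else insert None (Some ` qs G t))"
    using C y0 by (auto simp: PiE_def Pi_def subset_iff split: if_splits; metis)
  have "(\<Sum>y\<in>{y\<in>PiE {..<k} (\<lambda>t. insert None (Some ` qs G t)). \<forall>s\<in>C. y s = y0 s}. \<Prod>t<k. wq \<alpha> (x t) (y t))
     = (\<Prod>t<k. \<Sum>q\<in>(if t \<in> C then {y0 t} else insert None (Some ` qs G t)). wq \<alpha> (x t) q)"
    unfolding eq by (rule prod_sum_PiE[symmetric]) (auto simp: fin)
  also have "\<dots> = (\<Prod>t<k. if t \<in> C then wq \<alpha> (x t) (y0 t) else 1)"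
  proof (intro prod.cong refl)
    fix t assume t: "t \<in> {..<k}"
    then have "x t \<in> qs G t" using x by (auto simp: PiE_def Pi_def)
    then show "(\<Sum>q\<in>(if t \<in> C then {y0 t} else insert None (Some ` qs G t)). wq \<alpha> (x t) q) = (if t \<in> C then wq \<alpha> (x t) (y0 t) else 1)"
      using sum_wq[OF fin, of t "x t" \<alpha>] t by simp
  qed
  also have "\<dots> = (\<Prod>s\<in>C. wq \<alpha> (x s) (y0 s))"
    using C by (simp add: prod.If_cases Int_absorb1 inf.absorb2)
  finally show ?thesis .
qed

lemma sumW_all:
  assumes G: "is_game k G" and x: "x \<in> questions k G"
  shows "(\<Sum>y\<in>PiE {..<k} (\<lambda>t. insert None (Some ` qs G t)). \<Prod>t<k. wq \<alpha> (x t) (y t)) = 1"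
  using sumW_restrict[OF G x, of "{}"] by simp

lemma perp_value:
  assumes G: "is_game k G"
    and g: "\<forall>y\<in>PiE {..<k} (\<lambda>t. insert None (Some ` qs G t)). (\<exists>t<k. y t = None) \<longrightarrow> g y = 1"
  shows "(\<Sum>y\<in>PiE {..<k} (\<lambda>t. insert None (Some ` qs G t)). dist (perp_game k \<alpha> G) y * g y)
       = 1 - (1 - \<alpha>) ^ k * (1 - (\<Sum>x\<in>questions k G. dist G x * g (\<lambda>t\<in>{..<k}. Some (x t))))"
proof -
  let ?Y = "PiE {..<k} (\<lambda>t. insert None (Some ` qs G t))"
  let ?W = "\<lambda>x y. \<Prod>t<k. wq \<alpha> (x t) (y t)"
  have finQ: "finite (questions k G)" using G by (auto simp: is_game_def intro!: finite_PiE)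
  have finY: "finite ?Y" using G by (auto simp: is_game_def intro!: finite_PiE)
  have inner: "(\<Sum>y\<in>?Y. ?W x y * g y) = 1 - (1 - \<alpha>) ^ k * (1 - g (\<lambda>t\<in>{..<k}. Some (x t)))"
    if x: "x \<in> questions k G" for x
  proof -
    define y0 where "y0 = (\<lambda>t\<in>{..<k}. Some (x t))"
    have y0Y: "y0 \<in> ?Y" using x unfolding y0_def by (auto simp: PiE_def Pi_def)
    have W0: "?W x y0 = (1 - \<alpha>) ^ k" unfolding y0_def by (simp add: wq_def)
    have zero: "?W x y * (1 - g y) = 0" if y: "y \<in> ?Y - {y0}" for y
    proof -
      have "\<exists>t<k. y t \<noteq> y0 t"
      proof (rule ccontr)
        assume "\<not> ?thesis"
        then have "y = y0" using y y0Y by (auto simp: PiE_def extensional_def fun_eq_iff) (metis lessThan_iff)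
        then show False using y by simp
      qed
      then obtain t where t: "t < k" "y t \<noteq> y0 t" by blast
      show ?thesis
      proof (cases "y t = None")
        case True then show ?thesis using g y t by auto
      next
        case False
        then have "wq \<alpha> (x t) (y t) = 0" using t unfolding y0_def wq_def by auto
        then have "?W x y = 0" using t by (intro prod_zero) auto
        then show ?thesis by simp
      qed
    qed
    have "(\<Sum>y\<in>?Y. ?W x y * (1 - g y)) = ?W x y0 * (1 - g y0) + (\<Sum>y\<in>?Y - {y0}. ?W x y * (1 - g y))"
      using finY y0Y by (rule sum.remove)
    also have "(\<Sum>y\<in>?Y - {y0}. ?W x y * (1 - g y)) = 0" using zero by (intro sum.neutral) auto
    finally have A: "(\<Sum>y\<in>?Y. ?W x y * (1 - g y)) = (1 - \<alpha>) ^ k * (1 - g y0)" using W0 by simp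
    have "(\<Sum>y\<in>?Y. ?W x y * g y) = (\<Sum>y\<in>?Y. ?W x y) - (\<Sum>y\<in>?Y. ?W x y * (1 - g y))"
      by (simp add: sum_subtractf[symmetric] algebra_simps)
    also have "\<dots> = 1 - (1 - \<alpha>) ^ k * (1 - g y0)" using A sumW_all[OF G x] by simp
    finally show ?thesis unfolding y0_def .
  qed
  have "(\<Sum>y\<in>?Y. dist (perp_game k \<alpha> G) y * g y) = (\<Sum>y\<in>?Y. \<Sum>x\<in>questions k G. dist G x * (?W x y * g y))"
    by (intro sum.cong refl) (simp add: perp_dist sum_distrib_right mult.assoc)
  also have "\<dots> = (\<Sum>x\<in>questions k G. dist G x * (\<Sum>y\<in>?Y. ?W x y * g y))"
    by (subst sum.swap) (simp add: sum_distrib_left)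
  also have "\<dots> = (\<Sum>x\<in>questions k G. dist G x * (1 - (1 - \<alpha>) ^ k * (1 - g (\<lambda>t\<in>{..<k}. Some (x t)))))"
    using inner by (intro sum.cong refl) simp
  also have "\<dots> = (\<Sum>x\<in>questions k G. dist G x) - (1 - \<alpha>) ^ k * ((\<Sum>x\<in>questions k G. dist G x) - (\<Sum>x\<in>questions k G. dist G x * g (\<lambda>t\<in>{..<k}. Some (x t))))"
    by (simp add: algebra_simps sum_subtractf sum_distrib_left sum.distrib)
  also have "(\<Sum>x\<in>questions k G. dist G x) = 1" using G by (simp add: is_game_def)
  finally show ?thesis .
qed

lemma wq_nonneg: "0 \<le> \<alpha> \<Longrightarrow> \<alpha> \<le> 1 \<Longrightarrow> 0 \<le> wq \<alpha> q y"
  by (simp add: wq_def)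

lemma perp_is_game:
  assumes G: "is_game k G" and a: "0 \<le> \<alpha>" "\<alpha> \<le> 1"
  shows "is_game k (perp_game k \<alpha> G)"
proof -
  have s: "(\<Sum>y\<in>PiE {..<k} (\<lambda>t. insert None (Some ` qs G t)). dist (perp_game k \<alpha> G) y * 1) = 1"
    using perp_value[OF G, of "\<lambda>_. 1" \<alpha>] G by (simp add: is_game_def)
  have nn: "0 \<le> dist (perp_game k \<alpha> G) y" for y
    using G a unfolding perp_dist is_game_def
    by (auto intro!: sum_nonneg mult_nonneg_nonneg prod_nonneg wq_nonneg)
  show ?thesis
    using G s nn unfolding is_game_def perp_simps by (auto simp: perp_dist)
qed

lemma marg_perp:
  assumes G: "is_game k G" and S: "S \<subseteq> {..<k}" and y: "\<forall>s\<in>S. y s \<in> insert None (Some ` qs G s)"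
  shows "marg k (perp_game k \<alpha> G) S y = (\<Sum>x\<in>questions k G. dist G x * (\<Prod>s\<in>S. wq \<alpha> (x s) (y s)))"
proof -
  let ?Y = "PiE {..<k} (\<lambda>t. insert None (Some ` qs G t))"
  let ?R = "{y'\<in>?Y. \<forall>t\<in>S. y' t = y t}"
  have finQ: "finite (questions k G)" using G by (auto simp: is_game_def intro!: finite_PiE)
  have "marg k (perp_game k \<alpha> G) S y = (\<Sum>y'\<in>?R. \<Sum>x\<in>questions k G. dist G x * (\<Prod>t<k. wq \<alpha> (x t) (y' t)))"
    unfolding marg_def perp_simps by (intro sum.cong refl) (simp add: perp_dist)
  also have "\<dots> = (\<Sum>x\<in>questions k G. dist G x * (\<Sum>y'\<in>?R. \<Prod>t<k. wq \<alpha> (x t) (y' t)))"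
    by (subst sum.swap) (simp add: sum_distrib_left)
  also have "\<dots> = (\<Sum>x\<in>questions k G. dist G x * (\<Prod>s\<in>S. wq \<alpha> (x s) (y s)))"
    using sumW_restrict[OF G _ S y] by (intro sum.cong refl) simp
  finally show ?thesis .
qed

lemma perp_anchored:
  assumes G: "is_game k G" and a: "0 \<le> \<alpha>" "\<alpha> \<le> 1"
  shows "anchored k \<alpha> (perp_game k \<alpha> G)"
  unfolding anchored_def
proof (intro conjI perp_is_game[OF assms] exI[of _ "\<lambda>_. {None}"] allI impI ballI)
  let ?Y = "PiE {..<k} (\<lambda>t. insert None (Some ` qs G t))"
  have sumQ: "(\<Sum>x\<in>questions k G. dist G x) = 1" using G by (simp add: is_game_def)
  have margt: "marg k (perp_game k \<alpha> G) {t} y = \<alpha>" if "t < k" "y t = None" for t y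
    using marg_perp[OF G, of "{t}" y \<alpha>] that sumQ by (simp add: wq_def sum_distrib_right[symmetric])
  fix t assume t: "t < k"
  show "{None} \<subseteq> qs (perp_game k \<alpha> G) t" by (simp add: perp_simps)
  have "{x \<in> questions k (perp_game k \<alpha> G). x t \<in> {None}} = {y' \<in> questions k (perp_game k \<alpha> G). \<forall>s\<in>{t}. y' s = (\<lambda>_. None) s}"
    by auto
  then show "\<alpha> \<le> (\<Sum>x\<in>{x \<in> questions k (perp_game k \<alpha> G). x t \<in> {None}}. dist (perp_game k \<alpha> G) x)"
    using margt[OF t, of "\<lambda>_. None"] unfolding marg_def by simp
next
  let ?Y = "PiE {..<k} (\<lambda>t. insert None (Some ` qs G t))"
  have sumQ: "(\<Sum>x\<in>questions k G. dist G x) = 1" using G by (simp add: is_game_def)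
  fix y assume y: "y \<in> questions k (perp_game k \<alpha> G)"
  then have yY: "y \<in> ?Y" by (simp add: perp_simps)
  define F where "F = {t \<in> {..<k}. y t \<in> {None}}"
  have F: "F \<subseteq> {..<k}" unfolding F_def by auto
  have yin: "\<forall>s\<in>S. y s \<in> insert None (Some ` qs G s)" if "S \<subseteq> {..<k}" for S
    using yY that by (auto simp: PiE_def Pi_def)
  have margt: "marg k (perp_game k \<alpha> G) {t} y = \<alpha>" if "t \<in> F" for t
    using marg_perp[OF G, of "{t}" y \<alpha>] that sumQ yin[of "{t}"] F
    by (auto simp: F_def wq_def sum_distrib_right[symmetric])
  have "dist (perp_game k \<alpha> G) y = (\<Sum>x\<in>questions k G. dist G x * (\<Prod>t<k. wq \<alpha> (x t) (y t)))"
    using yY by (simp add: perp_dist)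
  also have "\<dots> = (\<Sum>x\<in>questions k G. dist G x * (\<Prod>s\<in>{..<k} - F. wq \<alpha> (x s) (y s))) * \<alpha> ^ card F"
  proof -
    have "(\<Prod>t<k. wq \<alpha> (x t) (y t)) = (\<Prod>s\<in>{..<k} - F. wq \<alpha> (x s) (y s)) * \<alpha> ^ card F" for x
    proof -
      have "(\<Prod>t<k. wq \<alpha> (x t) (y t)) = (\<Prod>s\<in>{..<k} - F. wq \<alpha> (x s) (y s)) * (\<Prod>s\<in>F. wq \<alpha> (x s) (y s))"
        using F by (intro prod.subset_diff) auto
      also have "(\<Prod>s\<in>F. wq \<alpha> (x s) (y s)) = (\<Prod>s\<in>F. \<alpha>)"
        by (intro prod.cong refl) (auto simp: F_def wq_def)
      finally show ?thesis by simp
    qed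
    then show ?thesis by (simp add: sum_distrib_right mult.assoc)
  qed
  also have "\<dots> = marg k (perp_game k \<alpha> G) ({..<k} - F) y * (\<Prod>t\<in>F. marg k (perp_game k \<alpha> G) {t} y)"
    using marg_perp[OF G, of "{..<k} - F" y \<alpha>] yin[of "{..<k} - F"] margt by simp
  finally show "let F = {t \<in> {..<k}. y t \<in> {None}} in
      dist (perp_game k \<alpha> G) y = marg k (perp_game k \<alpha> G) ({..<k} - F) y * (\<Prod>t\<in>F. marg k (perp_game k \<alpha> G) {t} y)"
    unfolding F_def Let_def .
qed

lemma y0_facts:
  assumes "x \<in> questions k G"
  shows "(\<lambda>t\<in>{..<k}. the ((\<lambda>t\<in>{..<k}. Some (x t)) t)) = x"
    "\<not> (\<exists>t<k. (\<lambda>t\<in>{..<k}. Some (x t)) t = None)"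
  using assms by (auto simp: PiE_def extensional_def fun_eq_iff)

definition cval :: "nat \<Rightarrow> ('q, 'a) game \<Rightarrow> (nat \<Rightarrow> 'q \<Rightarrow> 'a) \<Rightarrow> real" where
  "cval k G f = (\<Sum>x\<in>questions k G. dist G x * (if pred G x (\<lambda>t\<in>{..<k}. f t (x t)) then 1 else 0))"

lemma val_cval: "val k G = Sup {cval k G f | f. \<forall>t<k. \<forall>q\<in>qs G t. f t q \<in> ans G t}"
  unfolding val_def cval_def ..

lemma cval_perp:
  assumes G: "is_game k G"
  shows "cval k (perp_game k \<alpha> G) f = 1 - (1 - \<alpha>) ^ k * (1 - cval k G (\<lambda>t q. f t (Some q)))"
proof -
  have "cval k (perp_game k \<alpha> G) f = 1 - (1 - \<alpha>) ^ k * (1 - (\<Sum>x\<in>questions k G. dist G x *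
      (\<lambda>y. if pred (perp_game k \<alpha> G) y (\<lambda>t\<in>{..<k}. f t (y t)) then 1 else 0) (\<lambda>t\<in>{..<k}. Some (x t))))"
    unfolding cval_def perp_simps(1) by (rule perp_value[OF G]) (auto simp: perp_simps)
  also have "(\<Sum>x\<in>questions k G. dist G x *
      (\<lambda>y. if pred (perp_game k \<alpha> G) y (\<lambda>t\<in>{..<k}. f t (y t)) then 1 else 0) (\<lambda>t\<in>{..<k}. Some (x t)))
      = cval k G (\<lambda>t q. f t (Some q))"
    unfolding cval_def
  proof (intro sum.cong refl)
    fix x assume x: "x \<in> questions k G"
    have e: "(\<lambda>t\<in>{..<k}. f t ((\<lambda>t\<in>{..<k}. Some (x t)) t)) = (\<lambda>t\<in>{..<k}. f t (Some (x t)))"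
      by (auto simp: fun_eq_iff)
    show "dist G x * (\<lambda>y. if pred (perp_game k \<alpha> G) y (\<lambda>t\<in>{..<k}. f t (y t)) then 1 else 0) (\<lambda>t\<in>{..<k}. Some (x t)) =
          dist G x * (if pred G x (\<lambda>t\<in>{..<k}. f t (Some (x t))) then 1 else 0)"
      using y0_facts[OF x] by (simp only: perp_simps e) simp
  qed
  finally show ?thesis .
qed

lemma cval_le1:
  assumes G: "is_game k G" shows "cval k G f \<le> 1"
proof -
  have "cval k G f \<le> (\<Sum>x\<in>questions k G. dist G x)"
    unfolding cval_def using G by (intro sum_mono) (auto simp: is_game_def)
  then show ?thesis using G by (simp add: is_game_def)
qed

lemma memI: "P f \<Longrightarrow> g f \<in> {g f | f. P f}" by blast

lemma val_perp:
  assumes G: "is_game k G" and a: "0 \<le> \<alpha>" "\<alpha> \<le> 1"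
  shows "val k (perp_game k \<alpha> G) = 1 - (1 - \<alpha>) ^ k * (1 - val k G)"
proof -
  let ?S = "{cval k G f | f. \<forall>t<k. \<forall>q\<in>qs G t. f t q \<in> ans G t}"
  let ?h = "\<lambda>v. 1 - (1 - \<alpha>) ^ k * (1 - v)"
  have ansne: "\<And>t. t < k \<Longrightarrow> ans G t \<noteq> {}" using G by (simp add: is_game_def)
  have seteq: "{cval k (perp_game k \<alpha> G) f | f. \<forall>t<k. \<forall>q\<in>qs (perp_game k \<alpha> G) t. f t q \<in> ans (perp_game k \<alpha> G) t} = ?h ` ?S"
  proof (intro equalityI subsetI)
    fix v assume "v \<in> {cval k (perp_game k \<alpha> G) f | f. \<forall>t<k. \<forall>q\<in>qs (perp_game k \<alpha> G) t. f t q \<in> ans (perp_game k \<alpha> G) t}"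
    then obtain f where f: "\<forall>t<k. \<forall>q\<in>qs (perp_game k \<alpha> G) t. f t q \<in> ans (perp_game k \<alpha> G) t"
      and v: "v = cval k (perp_game k \<alpha> G) f" by blast
    have "\<forall>t<k. \<forall>q\<in>qs G t. f t (Some q) \<in> ans G t" using f by (simp add: perp_simps)
    then have "cval k G (\<lambda>t q. f t (Some q)) \<in> ?S" by (rule memI[where g="cval k G", of _ "\<lambda>t q. f t (Some q)"])
    moreover have "v = ?h (cval k G (\<lambda>t q. f t (Some q)))" using v cval_perp[OF G] by simp
    ultimately show "v \<in> ?h ` ?S" by (rule rev_image_eqI)
  next
    fix v assume "v \<in> ?h ` ?S"
    then obtain f where f: "\<forall>t<k. \<forall>q\<in>qs G t. f t q \<in> ans G t" and v: "v = ?h (cval k G f)" by blast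
    define f' where "f' = (\<lambda>t q. case q of None \<Rightarrow> (SOME a. a \<in> ans G t) | Some q' \<Rightarrow> f t q')"
    have f'v: "\<forall>t<k. \<forall>q\<in>qs (perp_game k \<alpha> G) t. f' t q \<in> ans (perp_game k \<alpha> G) t"
      using f ansne by (auto simp: perp_simps f'_def some_in_eq)
    moreover have "(\<lambda>t q. f' t (Some q)) = f" by (simp add: f'_def)
    then have "v = cval k (perp_game k \<alpha> G) f'" using v cval_perp[OF G, of \<alpha> f'] by simp
    moreover have "cval k (perp_game k \<alpha> G) f' \<in> {cval k (perp_game k \<alpha> G) f | f. \<forall>t<k. \<forall>q\<in>qs (perp_game k \<alpha> G) t. f t q \<in> ans (perp_game k \<alpha> G) t}"
      by (rule memI) (rule f'v)
    ultimately show "v \<in> {cval k (perp_game k \<alpha> G) f | f. \<forall>t<k. \<forall>q\<in>qs (perp_game k \<alpha> G) t. f t q \<in> ans (perp_game k \<alpha> G) t}"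
      by simp
  qed
  have ne: "?S \<noteq> {}"
  proof -
    have "\<forall>t<k. \<forall>q\<in>qs G t. (\<lambda>t q. SOME a. a \<in> ans G t) t q \<in> ans G t"
      using ansne by (auto simp: some_in_eq)
    then have "cval k G (\<lambda>t q. SOME a. a \<in> ans G t) \<in> ?S"
      by (intro memI[where P="\<lambda>f. \<forall>t<k. \<forall>q\<in>qs G t. f t q \<in> ans G t"]) simp
    then show ?thesis by blast
  qed
  have bdd: "bdd_above ?S" using cval_le1[OF G] by (auto intro!: bdd_aboveI)
  have e: "0 \<le> (1 - \<alpha>) ^ k" using a by simp
  show ?thesis unfolding val_cval seteq by (rule Sup_affine[OF ne bdd e])
qed



lemma te_TQ: "tensor_expect k d \<psi> M x a = TQ k d (\<lambda>t. M t (x t) (a t)) \<psi>"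
  by (simp add: tensor_expect_def TQ_def)

lemma basis_eq_iff:
  assumes "i \<in> basis_idx k d" "j \<in> basis_idx k d"
  shows "i = j \<longleftrightarrow> (\<forall>t<k. i t = j t)"
  using assms by (auto simp: PiE_def extensional_def fun_eq_iff) (metis lessThan_iff)

lemma te_sum_all:
  assumes M: "povm_strategy k G d M" and \<psi>: "unit_state k d \<psi>" and y: "\<forall>t<k. y t \<in> qs G t"
    and fin: "\<forall>t<k. finite (ans G t)"
  shows "(\<Sum>a\<in>answers k G. tensor_expect k d \<psi> M y a) = 1"
proof -
  let ?B = "basis_idx k d"
  have inner: "(\<Sum>a\<in>answers k G. \<Prod>t<k. M t (y t) (a t) (i t) (j t)) = (if i = j then 1 else 0)"
    if ij: "i \<in> ?B" "j \<in> ?B" for i j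
  proof -
    have "(\<Sum>a\<in>answers k G. \<Prod>t<k. M t (y t) (a t) (i t) (j t)) = (\<Prod>t<k. \<Sum>a\<in>ans G t. M t (y t) a (i t) (j t))"
      by (rule prod_sum_PiE[symmetric]) (use fin in auto)
    also have "\<dots> = (\<Prod>t<k. if i t = j t then 1 else 0)"
    proof (intro prod.cong refl)
      fix t assume t: "t \<in> {..<k}"
      have "i t < d" "j t < d" using ij t by (auto simp: PiE_def Pi_def)
      then show "(\<Sum>a\<in>ans G t. M t (y t) a (i t) (j t)) = (if i t = j t then 1 else 0)"
        using M y t unfolding povm_strategy_def by auto
    qed
    also have "\<dots> = (if i = j then 1 else 0)"
      using basis_eq_iff[OF ij] by (auto simp: prod_zero_iff)
    finally show ?thesis .
  qed
  have "(\<Sum>a\<in>answers k G. tensor_expect k d \<psi> M y a) =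
        (\<Sum>i\<in>?B. \<Sum>j\<in>?B. cnj (\<psi> i) * (\<Sum>a\<in>answers k G. \<Prod>t<k. M t (y t) (a t) (i t) (j t)) * \<psi> j)"
    unfolding tensor_expect_def
    by (subst sum.swap) (simp add: sum_distrib_left sum_distrib_right sum.swap[of _ "answers k G"])
  also have "\<dots> = (\<Sum>i\<in>?B. \<Sum>j\<in>?B. if i = j then cnj (\<psi> i) * \<psi> i else 0)"
    using inner by (intro sum.cong refl) auto
  also have "\<dots> = (\<Sum>i\<in>?B. complex_of_real ((cmod (\<psi> i))\<^sup>2))"
  proof (intro sum.cong refl)
    fix i assume i: "i \<in> ?B"
    have "finite ?B" by (rule finite_PiE) auto
    then have "(\<Sum>j\<in>?B. if i = j then cnj (\<psi> i) * \<psi> i else 0) = cnj (\<psi> i) * \<psi> i"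
      using i by simp
    also have "\<dots> = complex_of_real ((cmod (\<psi> i))\<^sup>2)"
      by (subst complex_norm_square) (rule mult.commute)
    finally show "(\<Sum>j\<in>?B. if i = j then cnj (\<psi> i) * \<psi> i else 0) = complex_of_real ((cmod (\<psi> i))\<^sup>2)" .
  qed
  also have "\<dots> = complex_of_real (\<Sum>i\<in>?B. (cmod (\<psi> i))\<^sup>2)" by (rule of_real_sum[symmetric])
  also have "\<dots> = 1" using \<psi> unfolding unit_state_def by simp
  finally show ?thesis .
qed

lemma ent_le1:
  assumes G: "is_game k G" and M: "povm_strategy k G d M" and \<psi>: "unit_state k d \<psi>"
  shows "ent_strategy_value k G d \<psi> M \<le> 1"
proof -
  have fin: "\<forall>t<k. finite (ans G t)" using G by (simp add: is_game_def)
  have finA: "finite (answers k G)" using fin by (auto intro!: finite_PiE)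
  have bound: "Re (\<Sum>a\<in>{a\<in>answers k G. pred G x a}. tensor_expect k d \<psi> M x a) \<le> 1"
    if x: "x \<in> questions k G" for x
  proof -
    have xq: "\<forall>t<k. x t \<in> qs G t" using x by (auto simp: PiE_def Pi_def)
    let ?W = "{a\<in>answers k G. pred G x a}"
    have s1: "(\<Sum>a\<in>answers k G. tensor_expect k d \<psi> M x a) =
          (\<Sum>a\<in>answers k G - ?W. tensor_expect k d \<psi> M x a) + (\<Sum>a\<in>?W. tensor_expect k d \<psi> M x a)"
      using finA by (intro sum.subset_diff) auto
    have s2: "(\<Sum>a\<in>answers k G. tensor_expect k d \<psi> M x a) = 1"
      by (rule te_sum_all[OF M \<psi> xq fin])
    have s3: "Re (\<Sum>a\<in>answers k G - ?W. tensor_expect k d \<psi> M x a) + Re (\<Sum>a\<in>?W. tensor_expect k d \<psi> M x a) = 1"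
      using arg_cong[OF trans[OF s1[symmetric] s2], of Re] by (simp only: plus_complex.sel one_complex.sel)
    have "0 \<le> Re (\<Sum>a\<in>answers k G - ?W. tensor_expect k d \<psi> M x a)"
      unfolding Re_sum
    proof (intro sum_nonneg)
      fix a assume a: "a \<in> answers k G - ?W"
      have "\<forall>t<k. psd d (M t (x t) (a t))"
        using a xq M unfolding povm_strategy_def by (auto simp: PiE_def Pi_def)
      then show "0 \<le> Re (tensor_expect k d \<psi> M x a)" unfolding te_TQ by (rule TQ_nonneg)
    qed
    then show ?thesis using s3 by linarith
  qed
  have "ent_strategy_value k G d \<psi> M = (\<Sum>x\<in>questions k G. dist G x * Re (\<Sum>a\<in>{a\<in>answers k G. pred G x a}. tensor_expect k d \<psi> M x a))"
    unfolding ent_strategy_value_def Re_sum by (intro sum.cong refl) simp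
  also have "\<dots> \<le> (\<Sum>x\<in>questions k G. dist G x * 1)"
    using G bound by (intro sum_mono mult_left_mono) (auto simp: is_game_def simp del: Re_sum)
  also have "\<dots> = 1" using G by (simp add: is_game_def)
  finally show ?thesis .
qed

lemma povm_perp_restrict:
  "povm_strategy k (perp_game k \<alpha> G) d M \<Longrightarrow> povm_strategy k G d (\<lambda>t q. M t (Some q))"
  unfolding povm_strategy_def perp_simps by auto

lemma povm_perp_extend:
  assumes G: "is_game k G" and M: "povm_strategy k G d M"
  shows "povm_strategy k (perp_game k \<alpha> G) d
          (\<lambda>t q. case q of None \<Rightarrow> M t (SOME q. q \<in> qs G t) | Some q' \<Rightarrow> M t q')"
proof -
  have "(SOME q. q \<in> qs G t) \<in> qs G t" if "t < k" for t
    using game_qs_nonempty[OF G that] by (simp add: some_in_eq)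
  then show ?thesis using M unfolding povm_strategy_def perp_simps by auto
qed

lemma ent_perp:
  assumes G: "is_game k G" and M: "povm_strategy k (perp_game k \<alpha> G) d M" and \<psi>: "unit_state k d \<psi>"
  shows "ent_strategy_value k (perp_game k \<alpha> G) d \<psi> M =
         1 - (1 - \<alpha>) ^ k * (1 - ent_strategy_value k G d \<psi> (\<lambda>t q. M t (Some q)))"
proof -
  let ?Y = "PiE {..<k} (\<lambda>t. insert None (Some ` qs G t))"
  define g where "g = (\<lambda>y. Re (\<Sum>a\<in>{a\<in>answers k G. pred (perp_game k \<alpha> G) y a}. tensor_expect k d \<psi> M y a))"
  have fin: "\<forall>t<k. finite (ans G t)" using G by (simp add: is_game_def)
  have "ent_strategy_value k (perp_game k \<alpha> G) d \<psi> M = (\<Sum>y\<in>?Y. dist (perp_game k \<alpha> G) y * g y)"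
    unfolding ent_strategy_value_def Re_sum g_def perp_simps by (intro sum.cong refl) simp
  also have "\<dots> = 1 - (1 - \<alpha>) ^ k * (1 - (\<Sum>x\<in>questions k G. dist G x * g (\<lambda>t\<in>{..<k}. Some (x t))))"
  proof (rule perp_value[OF G])
    show "\<forall>y\<in>?Y. (\<exists>t<k. y t = None) \<longrightarrow> g y = 1"
    proof (intro ballI impI)
      fix y assume y: "y \<in> ?Y" and N: "\<exists>t<k. y t = None"
      have "{a\<in>answers k G. pred (perp_game k \<alpha> G) y a} = answers k (perp_game k \<alpha> G)"
        using N by (auto simp: perp_simps)
      moreover have "(\<Sum>a\<in>answers k (perp_game k \<alpha> G). tensor_expect k d \<psi> M y a) = 1"
        by (rule te_sum_all[OF M \<psi>]) (use y fin in \<open>auto simp: perp_simps PiE_def Pi_def\<close>)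
      ultimately show "g y = 1" unfolding g_def by simp
    qed
  qed
  also have "(\<Sum>x\<in>questions k G. dist G x * g (\<lambda>t\<in>{..<k}. Some (x t))) = ent_strategy_value k G d \<psi> (\<lambda>t q. M t (Some q))"
    unfolding ent_strategy_value_def Re_sum
  proof (intro sum.cong refl)
    fix x assume x: "x \<in> questions k G"
    have p: "pred (perp_game k \<alpha> G) (\<lambda>t\<in>{..<k}. Some (x t)) a = pred G x a" for a
      using y0_facts[OF x] by (simp add: perp_simps)
    have te: "tensor_expect k d \<psi> M (\<lambda>t\<in>{..<k}. Some (x t)) a = tensor_expect k d \<psi> (\<lambda>t q. M t (Some q)) x a" for a
    proof -
      have "(\<Prod>t<k. M t ((\<lambda>t\<in>{..<k}. Some (x t)) t) (a t) (i t) (j t)) = (\<Prod>t<k. M t (Some (x t)) (a t) (i t) (j t))" for i j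
        by (intro prod.cong refl) simp
      then show ?thesis unfolding tensor_expect_def by simp
    qed
    show "dist G x * g (\<lambda>t\<in>{..<k}. Some (x t)) =
          Re (complex_of_real (dist G x) * (\<Sum>a\<in>{a\<in>answers k G. pred G x a}. tensor_expect k d \<psi> (\<lambda>t q. M t (Some q)) x a))"
      unfolding g_def p te by (simp del: Re_sum)
  qed
  finally show ?thesis .
qed

lemma psd_id_or_zero:
  "psd d (\<lambda>i j. if b \<and> i = j then 1 else 0)"
proof (cases b)
  case True
  have "qf d (\<lambda>i j. if b \<and> i = j then 1 else 0) v = (\<Sum>i<d. complex_of_real ((cmod (v i))\<^sup>2))" for v
    unfolding qf_def using True
  proof (intro sum.cong refl)
    fix i assume i: "i \<in> {..<d}"
    have "(\<Sum>j<d. cnj (v i) * (if b \<and> i = j then 1 else 0) * v j) = (\<Sum>j<d. if i = j then cnj (v i) * v i else 0)"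
      using True by (intro sum.cong refl) auto
    also have "\<dots> = cnj (v i) * v i" using i by simp
    also have "\<dots> = complex_of_real ((cmod (v i))\<^sup>2)" by (subst complex_norm_square) (rule mult.commute)
    finally show "(\<Sum>j<d. cnj (v i) * (if b \<and> i = j then 1 else 0) * v j) = complex_of_real ((cmod (v i))\<^sup>2)" .
  qed
  then show ?thesis unfolding psd_qf by (simp del: of_real_power add: sum_nonneg)
next
  case False
  then show ?thesis unfolding psd_def by simp
qed

lemma ent_nonempty:
  assumes G: "is_game k G"
  shows "\<exists>d \<psi> M. 2 \<le> d \<and> unit_state k d \<psi> \<and> povm_strategy k G d M"
proof -
  define i0 :: "nat \<Rightarrow> nat" where "i0 = (\<lambda>t\<in>{..<k}. 0)"
  define \<psi> :: "(nat \<Rightarrow> nat) \<Rightarrow> complex" where "\<psi> = (\<lambda>i. if i = i0 then 1 else 0)"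
  define M :: "nat \<Rightarrow> 'a \<Rightarrow> 'b \<Rightarrow> nat \<Rightarrow> nat \<Rightarrow> complex" where
    "M = (\<lambda>t q a i j. if a = (SOME a. a \<in> ans G t) \<and> i = j then 1 else 0)"
  have i0B: "i0 \<in> basis_idx k 2" unfolding i0_def by auto
  have fB: "finite (basis_idx k 2)" by (rule finite_PiE) auto
  have "(\<Sum>i\<in>basis_idx k 2. (cmod (\<psi> i))\<^sup>2) = (\<Sum>i\<in>basis_idx k 2. if i = i0 then 1 else 0)"
    unfolding \<psi>_def by (intro sum.cong refl) simp
  also have "\<dots> = 1" using i0B fB by simp
  finally have u: "unit_state k 2 \<psi>" unfolding unit_state_def .
  have p: "povm_strategy k G 2 M"
    unfolding povm_strategy_def
  proof (intro allI impI ballI conjI)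
    fix t q a assume "t < k" "q \<in> qs G t" "a \<in> ans G t"
    show "psd 2 (M t q a)" unfolding M_def by (rule psd_id_or_zero)
  next
    fix t q i j assume t: "t < k" "q \<in> qs G t" "i < (2::nat)" "j < (2::nat)"
    have a0: "(SOME a. a \<in> ans G t) \<in> ans G t" using G t by (simp add: is_game_def some_in_eq)
    have fa: "finite (ans G t)" using G t by (simp add: is_game_def)
    show "(\<Sum>a\<in>ans G t. M t q a i j) = (if i = j then 1 else 0)"
    proof (cases "i = j")
      case True
      then show ?thesis unfolding M_def using a0 fa by simp
    next
      case False
      then show ?thesis unfolding M_def by simp
    qed
  qed
  show ?thesis using u p by (intro exI[of _ 2] exI[of _ \<psi>] exI[of _ M]) simp
qed

lemma val_ent_perp:
  assumes G: "is_game k G" and a: "0 \<le> \<alpha>" "\<alpha> \<le> 1"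
  shows "val_ent k (perp_game k \<alpha> G) = 1 - (1 - \<alpha>) ^ k * (1 - val_ent k G)"
proof -
  let ?S = "{ent_strategy_value k G d \<psi> M | d \<psi> M. 2 \<le> d \<and> unit_state k d \<psi> \<and> povm_strategy k G d M}"
  let ?P = "{ent_strategy_value k (perp_game k \<alpha> G) d \<psi> M | d \<psi> M. 2 \<le> d \<and> unit_state k d \<psi> \<and> povm_strategy k (perp_game k \<alpha> G) d M}"
  let ?h = "\<lambda>v. 1 - (1 - \<alpha>) ^ k * (1 - v)"
  have seteq: "?P = ?h ` ?S"
  proof (intro equalityI subsetI)
    fix v assume "v \<in> ?P"
    then obtain d \<psi> M where d: "2 \<le> d" and u: "unit_state k d \<psi>" and M: "povm_strategy k (perp_game k \<alpha> G) d M"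
      and v: "v = ent_strategy_value k (perp_game k \<alpha> G) d \<psi> M" by blast
    have "ent_strategy_value k G d \<psi> (\<lambda>t q. M t (Some q)) \<in> ?S"
      using d u povm_perp_restrict[OF M] by blast
    moreover have "v = ?h (ent_strategy_value k G d \<psi> (\<lambda>t q. M t (Some q)))"
      using v ent_perp[OF G M u] by simp
    ultimately show "v \<in> ?h ` ?S" by (rule rev_image_eqI)
  next
    fix v assume "v \<in> ?h ` ?S"
    then obtain d \<psi> M where d: "2 \<le> d" and u: "unit_state k d \<psi>" and M: "povm_strategy k G d M"
      and v: "v = ?h (ent_strategy_value k G d \<psi> M)" by blast
    define M' where "M' = (\<lambda>t q. case q of None \<Rightarrow> M t (SOME q. q \<in> qs G t) | Some q' \<Rightarrow> M t q')"
    have M': "povm_strategy k (perp_game k \<alpha> G) d M'"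
      unfolding M'_def by (rule povm_perp_extend[OF G M])
    have "(\<lambda>t q. M' t (Some q)) = M" by (simp add: M'_def)
    then have "v = ent_strategy_value k (perp_game k \<alpha> G) d \<psi> M'" using v ent_perp[OF G M' u] by simp
    then show "v \<in> ?P" using d u M' by blast
  qed
  have ne: "?S \<noteq> {}" using ent_nonempty[OF G] by blast
  have bdd: "bdd_above ?S" using ent_le1[OF G] by (auto intro!: bdd_aboveI)
  have e: "0 \<le> (1 - \<alpha>) ^ k" using a by simp
  show ?thesis unfolding val_ent_def seteq by (rule Sup_affine[OF ne bdd e])
qed

theorem proposition3p6:
  fixes k :: nat and \<alpha> :: real and G :: "('q, 'a) game"
  assumes "1 \<le> k" and "0 < \<alpha>" and "\<alpha> \<le> 1" and "is_game k G"
  shows "anchored k \<alpha> (perp_game k \<alpha> G) \<and>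
         val k (perp_game k \<alpha> G) = 1 - (1 - \<alpha>) ^ k * (1 - val k G) \<and>
         val_ent k (perp_game k \<alpha> G) = 1 - (1 - \<alpha>) ^ k * (1 - val_ent k G)"
  using perp_anchored[OF assms(4)] val_perp[OF assms(4)] val_ent_perp[OF assms(4)] assms(2,3) by simp

end
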